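(* Every tree-cograph has no induced cycle of length more than four.
   Context: Tree-cographs are defined recursively: (1) every tree is a tree-cograph; (2) if $G$ is a tree-cograph then its complement $\bar G$ is a tree-cograph; (3) for $k\ge 2$, if $G_1,\dots,G_k$ are connected tree-cographs then their disjoint union is a tree-cograph. *)

theory Defs
  imports Main
begin

type_synonym 'a graph = "'a set \<times> 'a set set"

definition verts :: "'a graph \<Rightarrow> 'a set" where "verts G = fst G"
definition edges :: "'a graph \<Rightarrow> 'a set set" where "edges G = snd G"

definition wf_graph :: "'a graph \<Rightarrow> bool" where
  "wf_graph G \<longleftrightarrow> finite (verts G) \<and>
     (\<forall>e\<in>edges G. \<exists>u v. e = {u, v} \<and> u \<noteq> v \<and> u \<in> verts G \<and> v \<in> verts G)"

definition adj :: "'a graph \<Rightarrow> 'a \<Rightarrow> 'a \<Rightarrow> bool" where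
  "adj G u v \<longleftrightarrow> {u, v} \<in> edges G"

definition connected_graph :: "'a graph \<Rightarrow> bool" where
  "connected_graph G \<longleftrightarrow> verts G \<noteq> {} \<and>
     (\<forall>u\<in>verts G. \<forall>v\<in>verts G. (adj G)\<^sup>*\<^sup>* u v)"

definition is_cycle :: "'a graph \<Rightarrow> 'a list \<Rightarrow> bool" where
  "is_cycle G vs \<longleftrightarrow> length vs \<ge> 3 \<and> distinct vs \<and> set vs \<subseteq> verts G \<and>
     (\<forall>i<length vs. adj G (vs ! i) (vs ! ((i + 1) mod length vs)))"

definition is_induced_cycle :: "'a graph \<Rightarrow> 'a list \<Rightarrow> bool" where
  "is_induced_cycle G vs \<longleftrightarrow> is_cycle G vs \<and>
     (\<forall>i<length vs. \<forall>j<length vs. adj G (vs ! i) (vs ! j) \<longrightarrow>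
         j = (i + 1) mod length vs \<or> i = (j + 1) mod length vs)"

definition is_tree :: "'a graph \<Rightarrow> bool" where
  "is_tree G \<longleftrightarrow> wf_graph G \<and> connected_graph G \<and> (\<nexists>vs. is_cycle G vs)"

definition complement :: "'a graph \<Rightarrow> 'a graph" where
  "complement G = (verts G,
     {{u, v} | u v. u \<in> verts G \<and> v \<in> verts G \<and> u \<noteq> v \<and> {u, v} \<notin> edges G})"

definition disjoint_union :: "'a graph list \<Rightarrow> 'a graph" where
  "disjoint_union Gs = (\<Union>G\<in>set Gs. verts G, \<Union>G\<in>set Gs. edges G)"

inductive tree_cograph :: "'a graph \<Rightarrow> bool" where
  tree: "is_tree G \<Longrightarrow> tree_cograph G"
| compl: "tree_cograph G \<Longrightarrow> tree_cograph (complement G)"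
| union: "\<lbrakk> length Gs \<ge> 2;
            \<forall>G\<in>set Gs. tree_cograph G \<and> connected_graph G;
            \<forall>i<length Gs. \<forall>j<length Gs. i \<noteq> j \<longrightarrow> verts (Gs ! i) \<inter> verts (Gs ! j) = {} \<rbrakk>
          \<Longrightarrow> tree_cograph (disjoint_union Gs)"

end

theory Submission
  imports Defs
begin

definition nb :: "nat \<Rightarrow> nat \<Rightarrow> nat \<Rightarrow> bool" where
  "nb n i j \<longleftrightarrow> j = (i + 1) mod n \<or> i = (j + 1) mod n"

definition pat :: "'a graph \<Rightarrow> 'a list \<Rightarrow> bool \<Rightarrow> bool" where
  "pat G vs b \<longleftrightarrow> length vs \<ge> 5 \<and> distinct vs \<and> set vs \<subseteq> verts G \<and>
    (\<forall>i<length vs. \<forall>j<length vs. i \<noteq> j \<longrightarrow> (adj G (vs!i) (vs!j) \<longleftrightarrow> (nb (length vs) i j = b)))"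

lemma patD:
  assumes "pat G vs b"
  shows "length vs \<ge> 5" "distinct vs" "set vs \<subseteq> verts G"
  using assms unfolding pat_def by blast+

lemma patD4:
  assumes "pat G vs b" "i < length vs" "j < length vs" "i \<noteq> j"
  shows "adj G (vs!i) (vs!j) \<longleftrightarrow> (nb (length vs) i j = b)"
proof -
  have "\<forall>i<length vs. \<forall>j<length vs. i \<noteq> j \<longrightarrow> (adj G (vs!i) (vs!j) \<longleftrightarrow> (nb (length vs) i j = b))"
    using assms(1) unfolding pat_def by (elim conjE)
  then show ?thesis using assms(2-4) by blast
qed
lemma patI:
  assumes "length vs \<ge> 5" "distinct vs" "set vs \<subseteq> verts G"
    "\<And>i j. i < length vs \<Longrightarrow> j < length vs \<Longrightarrow> i \<noteq> j \<Longrightarrow> adj G (vs!i) (vs!j) \<longleftrightarrow> (nb (length vs) i j = b)"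
  shows "pat G vs b"
  unfolding pat_def using assms by blast
lemma adj_sym: "adj G u v = adj G v u"
  by (simp add: adj_def insert_commute)

lemma wf_adj: "wf_graph G \<Longrightarrow> adj G u v \<Longrightarrow> u \<in> verts G \<and> v \<in> verts G \<and> u \<noteq> v"
  unfolding wf_graph_def adj_def by (auto simp: doubleton_eq_iff)

lemma compl_wf: "wf_graph G \<Longrightarrow> wf_graph (complement G)"
  unfolding wf_graph_def complement_def verts_def edges_def by auto

lemma compl_adj:
  assumes "u \<in> verts G" "v \<in> verts G" "u \<noteq> v"
  shows "adj (complement G) u v \<longleftrightarrow> \<not> adj G u v"
proof
  assume "adj (complement G) u v"
  then obtain x y where "{u,v} = {x,y}" "{x,y} \<notin> edges G"
    unfolding adj_def complement_def edges_def by auto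
  then show "\<not> adj G u v" unfolding adj_def by simp
next
  assume "\<not> adj G u v"
  then show "adj (complement G) u v" using assms
    unfolding adj_def complement_def edges_def verts_def by auto
qed

lemma compl_verts: "verts (complement G) = verts G"
  by (simp add: complement_def verts_def)

lemma pat_compl:
  assumes p: "pat (complement G) vs b"
  shows "pat G vs (\<not> b)"
proof (rule patI)
  show "5 \<le> length vs" "distinct vs" using patD[OF p] by auto
  show "set vs \<subseteq> verts G" using patD(3)[OF p] by (simp add: compl_verts)
  fix i j assume ij: "i < length vs" "j < length vs" "i \<noteq> j"
  have "vs!i \<noteq> vs!j" using patD(2)[OF p] ij by (simp add: nth_eq_iff_index_eq)
  moreover have "vs!i \<in> verts G" "vs!j \<in> verts G"
    using patD(3)[OF p] ij by (auto simp: compl_verts)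
  ultimately have "adj (complement G) (vs!i) (vs!j) \<longleftrightarrow> \<not> adj G (vs!i) (vs!j)"
    by (intro compl_adj) auto
  moreover have "adj (complement G) (vs!i) (vs!j) \<longleftrightarrow> (nb (length vs) i j = b)"
    by (rule patD4[OF p ij])
  ultimately show "adj G (vs ! i) (vs ! j) = (nb (length vs) i j = (\<not> b))" by blast
qed

lemma tree_pat:
  assumes "pat G vs b"
  shows "\<exists>ws. is_cycle G ws"
proof (cases b)
  case True
  let ?n = "length vs"
  have n: "?n \<ge> 5" using patD[OF assms] by auto
  have "is_cycle G vs"
    unfolding is_cycle_def
  proof (intro conjI allI impI)
    fix i assume i: "i < length vs"
    have ne: "i \<noteq> (i+1) mod ?n"
    proof (cases "i + 1 < ?n")
      case True then show ?thesis by simp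
    next
      case False then have "i + 1 = ?n" using i by simp
      then show ?thesis using n by simp
    qed
    have lt: "(i+1) mod ?n < ?n" using n by (intro mod_less_divisor) auto
    have "nb ?n i ((i+1) mod ?n)" by (simp add: nb_def)
    then show "adj G (vs ! i) (vs ! ((i + 1) mod ?n))"
      using patD4[OF assms i lt ne] True by simp
  qed (use patD[OF assms] in auto)
  then show ?thesis by blast
next
  case False
  let ?n = "length vs"
  have n: "?n \<ge> 5" and d: "distinct vs" and s: "set vs \<subseteq> verts G"
    using patD[OF assms] by auto
  have a: "\<And>i j. i < ?n \<Longrightarrow> j < ?n \<Longrightarrow> i \<noteq> j \<Longrightarrow> adj G (vs!i) (vs!j) \<longleftrightarrow> \<not> nb ?n i j"
    using patD4[OF assms] False by simp
  have m: "1 mod ?n = 1" "2 mod ?n = 2" "3 mod ?n = 3" "4 mod ?n = 4"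
    using n by simp_all
  have m5: "Suc 4 mod ?n \<noteq> 1" using n by (cases "?n = 5") auto
  have l: "0 < ?n" "1 < ?n" "2 < ?n" "3 < ?n" "4 < ?n" using n by auto
  have "\<not> nb ?n 0 2" unfolding nb_def using n by (cases "?n = 5") (simp_all add: mod_less)
  then have a02: "adj G (vs!0) (vs!2)" using a[OF l(1) l(3)] by simp
  have "\<not> nb ?n 2 4" unfolding nb_def using n by (cases "?n = 5") (simp_all add: mod_less)
  then have a24: "adj G (vs!2) (vs!4)" using a[OF l(3) l(5)] by simp
  have "\<not> nb ?n 4 1" unfolding nb_def using n by (cases "?n = 5") (simp_all add: mod_less)
  then have a41: "adj G (vs!4) (vs!1)" using a[OF l(5) l(2)] by simp
  have "\<not> nb ?n 1 3" unfolding nb_def using n by (cases "?n = 5") (simp_all add: mod_less)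
  then have a13: "adj G (vs!1) (vs!3)" using a[OF l(2) l(4)] by simp
  have "\<not> nb ?n 3 0" unfolding nb_def using n by (cases "?n = 5") (simp_all add: mod_less)
  then have a30: "adj G (vs!3) (vs!0)" using a[OF l(4) l(1)] by simp
  let ?w = "[vs!0, vs!2, vs!4, vs!1, vs!3]"
  have "distinct ?w" using d l by (simp add: nth_eq_iff_index_eq)
  moreover have "set ?w \<subseteq> verts G" using s l by (simp add: nth_mem subsetD)
  moreover have "\<forall>i<5. adj G (?w ! i) (?w ! ((i + 1) mod 5))"
  proof (intro allI impI)
    fix i :: nat assume "i < 5"
    then consider "i = 0" | "i = 1" | "i = 2" | "i = 3" | "i = 4" by linarith
    then show "adj G (?w ! i) (?w ! ((i + 1) mod 5))"
      by cases (simp_all add: a02 a24 a41[simplified] a13[simplified] a30)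
  qed
  ultimately have "is_cycle G ?w" unfolding is_cycle_def by simp
  then show ?thesis by blast
qed

lemma union_wf: "\<forall>G\<in>set Gs. wf_graph G \<Longrightarrow> wf_graph (disjoint_union Gs)"
  unfolding wf_graph_def disjoint_union_def verts_def edges_def by fastforce

lemma union_adj: "adj (disjoint_union Gs) u v \<longleftrightarrow> (\<exists>G\<in>set Gs. adj G u v)"
  unfolding adj_def disjoint_union_def edges_def by auto

lemma union_verts: "verts (disjoint_union Gs) = (\<Union>G\<in>set Gs. verts G)"
  unfolding disjoint_union_def verts_def by auto

lemma union_pat:
  assumes wf: "\<forall>G\<in>set Gs. wf_graph G"
    and dj: "\<forall>i<length Gs. \<forall>j<length Gs. i \<noteq> j \<longrightarrow> verts (Gs ! i) \<inter> verts (Gs ! j) = {}"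
    and p: "pat (disjoint_union Gs) vs b"
  shows "\<exists>G\<in>set Gs. pat G vs b"
proof -
  let ?U = "disjoint_union Gs"
  let ?n = "length vs"
  have n: "?n \<ge> 5" and d: "distinct vs" and s: "set vs \<subseteq> verts ?U"
    using patD[OF p] by auto
  have a: "\<And>i j. i < ?n \<Longrightarrow> j < ?n \<Longrightarrow> i \<noteq> j \<Longrightarrow> adj ?U (vs!i) (vs!j) \<longleftrightarrow> (nb ?n i j = b)"
    by (rule patD4[OF p])
  have B: "k = k'" if "k < length Gs" "k' < length Gs" "u \<in> verts (Gs!k)" "u \<in> verts (Gs!k')" for u k k'
  proof (rule ccontr)
    assume "k \<noteq> k'"
    then have "verts (Gs ! k) \<inter> verts (Gs ! k') = {}" using dj that(1,2) by simp
    then show False using that(3,4) by blast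
  qed
  have A: "\<exists>k<length Gs. u \<in> verts (Gs!k) \<and> v \<in> verts (Gs!k)" if uv: "adj ?U u v" for u v
  proof -
    obtain G where G: "G \<in> set Gs" "adj G u v" using union_adj[THEN iffD1, OF uv] by blast
    then obtain k where k: "k < length Gs" "G = Gs!k" by (metis in_set_conv_nth)
    have "wf_graph G" using wf G by blast
    then have "u \<in> verts G \<and> v \<in> verts G" using wf_adj[OF _ G(2)] by blast
    then show ?thesis using k by blast
  qed
  have "0 < ?n" using n by linarith
  then have "vs!0 \<in> set vs" by (rule nth_mem)
  then have "vs!0 \<in> verts ?U" by (rule subsetD[OF s])
  then obtain G0 where G0: "G0 \<in> set Gs" "vs!0 \<in> verts G0" unfolding union_verts by blast
  then obtain k0 where k0: "k0 < length Gs" "vs!0 \<in> verts (Gs!k0)"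
    by (metis in_set_conv_nth)
  have step: "\<And>u v. adj ?U u v \<Longrightarrow> v \<in> verts (Gs!k0) \<Longrightarrow> u \<in> verts (Gs!k0)"
  proof -
    fix u v assume uv: "adj ?U u v" "v \<in> verts (Gs!k0)"
    obtain k where k: "k < length Gs" "u \<in> verts (Gs!k)" "v \<in> verts (Gs!k)" using A[OF uv(1)] by blast
    have "k = k0" using B[OF k(1) k0(1) k(3) uv(2)] .
    then show "u \<in> verts (Gs!k0)" using k by simp
  qed
  have all: "\<forall>i<?n. vs!i \<in> verts (Gs!k0)"
  proof (cases b)
    case True
    show ?thesis
    proof (intro allI)
      fix i show "i < ?n \<longrightarrow> vs!i \<in> verts (Gs!k0)"
      proof (induction i)
        case 0 then show ?case using k0 by simp
      next
        case (Suc i)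
        show ?case
        proof
          assume i: "Suc i < ?n"
          have h: "Suc i < ?n" "i < ?n" "Suc i \<noteq> i" using i by auto
          have "nb ?n (Suc i) i" unfolding nb_def using i by simp
          then have "adj ?U (vs!Suc i) (vs!i)" using True a[OF h] by simp
          then show "vs ! Suc i \<in> verts (Gs ! k0)" using step Suc i by auto
        qed
      qed
    qed
  next
    case False
    have mid: "\<And>i. 2 \<le> i \<Longrightarrow> i + 2 \<le> ?n \<Longrightarrow> vs!i \<in> verts (Gs!k0)"
    proof -
      fix i assume i: "2 \<le> i" "i + 2 \<le> ?n"
      have h: "i < ?n" "0 < ?n" "i \<noteq> 0" using i by auto
      have "\<not> nb ?n i 0" unfolding nb_def using i n by simp
      then have "adj ?U (vs!i) (vs!0)" using False a[OF h] by simp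
      then show "vs!i \<in> verts (Gs!k0)" using step k0 by auto
    qed
    have v1: "vs!1 \<in> verts (Gs!k0)"
    proof -
      have h: "1 < ?n" "3 < ?n" "1 \<noteq> (3::nat)" using n by auto
      have "\<not> nb ?n 1 3" unfolding nb_def using n by (cases "?n = 5") (simp_all add: mod_less)
      then have "adj ?U (vs!1) (vs!3)" using False a[OF h] by simp
      then show ?thesis using step mid[of 3] n by auto
    qed
    have vl: "vs!(?n-1) \<in> verts (Gs!k0)"
    proof -
      have e: "?n - 1 + 1 = ?n" using n by linarith
      have z: "(?n - 1 + 1) mod ?n = 0" by (simp only: e) simp
      have t: "3 mod ?n = 3" using n by simp
      have "\<not> nb ?n (?n - 1) 2" unfolding nb_def using z t n by auto
      moreover have h: "?n - 1 < ?n" "2 < ?n" "?n - 1 \<noteq> 2" using n by linarith+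
      ultimately have "adj ?U (vs!(?n-1)) (vs!2)" using False a[OF h] by simp
      then show ?thesis using step mid[of 2] n by auto
    qed
    show ?thesis
    proof (intro allI impI)
      fix i assume "i < ?n"
      then consider "i = 0" | "i = 1" | "i = ?n - 1" | "2 \<le> i \<and> i + 2 \<le> ?n" by linarith
      then show "vs!i \<in> verts (Gs!k0)" using k0 v1 vl mid by cases auto
    qed
  qed
  have eq1: "adj (Gs!k0) u v" if u: "u \<in> verts (Gs!k0)" and uv: "adj ?U u v" for u v
  proof -
    obtain G' where G': "G' \<in> set Gs" "adj G' u v" using union_adj[THEN iffD1, OF uv] by blast
    then obtain k' where k': "k' < length Gs" "G' = Gs!k'" by (metis in_set_conv_nth)
    have "wf_graph G'" using wf G'(1) by blast
    then have "u \<in> verts G'" using wf_adj[OF _ G'(2)] by blast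
    then have "u \<in> verts (Gs!k')" using k'(2) by simp
    then have "k' = k0" by (rule B[OF k'(1) k0(1) _ u])
    then show "adj (Gs!k0) u v" using k' G' by simp
  qed
  have eq2: "adj ?U u v" if "adj (Gs!k0) u v" for u v
    unfolding union_adj using that nth_mem[OF k0(1)] by (rule bexI)
  have "pat (Gs!k0) vs b"
  proof (rule patI)
    show "set vs \<subseteq> verts (Gs!k0)"
    proof
      fix x assume "x \<in> set vs"
      then obtain i where "i < ?n" "x = vs!i" by (metis in_set_conv_nth)
      then show "x \<in> verts (Gs!k0)" using all by blast
    qed
    fix i j assume ij: "i < ?n" "j < ?n" "i \<noteq> j"
    show "adj (Gs ! k0) (vs ! i) (vs ! j) = (nb ?n i j = b)"
    proof -
      have "vs!i \<in> verts (Gs!k0)" using all ij by blast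
      then have "adj (Gs ! k0) (vs ! i) (vs ! j) \<longleftrightarrow> adj ?U (vs!i) (vs!j)" using eq1 eq2 by blast
      then show ?thesis using a[OF ij] by simp
    qed
  qed (use n d in auto)
  then show ?thesis using k0 by auto
qed

lemma main: "tree_cograph G \<Longrightarrow> wf_graph G \<and> (\<forall>vs b. \<not> pat G vs b)"
proof (induction rule: tree_cograph.induct)
  case (tree G)
  then have w: "wf_graph G" and nc: "\<nexists>vs. is_cycle G vs" unfolding is_tree_def by blast+
  have "\<not> pat G vs b" for vs b
  proof
    assume "pat G vs b"
    from tree_pat[OF this] nc show False by blast
  qed
  then show ?case using w by blast
next
  case (compl G)
  then have w: "wf_graph G" and np: "\<And>vs b. \<not> pat G vs b" by blast+
  have "\<not> pat (complement G) vs b" for vs b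
  proof
    assume "pat (complement G) vs b"
    from pat_compl[OF this] np show False by blast
  qed
  then show ?case using compl_wf[OF w] by blast
next
  case (union Gs)
  have w: "\<forall>G\<in>set Gs. wf_graph G" using union.IH by blast
  have np: "\<And>G vs b. G \<in> set Gs \<Longrightarrow> \<not> pat G vs b" using union.IH by blast
  have "\<not> pat (disjoint_union Gs) vs b" for vs b
  proof
    assume "pat (disjoint_union Gs) vs b"
    from union_pat[OF w union.hyps(2) this] np show False by blast
  qed
  then show ?case using union_wf[OF w] by blast
qed

theorem lemma1:
  fixes G :: "'a graph"
  assumes "tree_cograph G"
  shows "\<not> (\<exists>vs. is_induced_cycle G vs \<and> length vs > 4)"
proof
  assume "\<exists>vs. is_induced_cycle G vs \<and> length vs > 4"
  then obtain vs where c: "is_induced_cycle G vs" and l: "length vs > 4" by blast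
  have "pat G vs True"
  proof (rule patI)
    fix i j assume ij: "i < length vs" "j < length vs" "i \<noteq> j"
    show "adj G (vs ! i) (vs ! j) = (nb (length vs) i j = True)"
    proof
      assume "adj G (vs ! i) (vs ! j)"
      then show "nb (length vs) i j = True" using c ij unfolding is_induced_cycle_def nb_def by blast
    next
      assume "nb (length vs) i j = True"
      then consider "j = (i+1) mod length vs" | "i = (j+1) mod length vs" unfolding nb_def by auto
      then show "adj G (vs ! i) (vs ! j)"
      proof cases
        case 1
        have "\<forall>i<length vs. adj G (vs ! i) (vs ! ((i + 1) mod length vs))"
          using c unfolding is_induced_cycle_def is_cycle_def by blast
        then show ?thesis using 1 ij by blast
      next
        case 2
        have "\<forall>i<length vs. adj G (vs ! i) (vs ! ((i + 1) mod length vs))"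
          using c unfolding is_induced_cycle_def is_cycle_def by blast
        then have "adj G (vs ! j) (vs ! i)" using 2 ij by blast
        then show ?thesis by (simp add: adj_sym)
      qed
    qed
  next
    show "5 \<le> length vs" using l by simp
    show "distinct vs" "set vs \<subseteq> verts G" using c unfolding is_induced_cycle_def is_cycle_def by blast+
  qed
  then show False using main assms by blast
qed

end
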